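(* Let $K_n$ denote the number of fully heterochronous ranked tree shapes with $n$ leaves. Then $K_1=K_2=1$ and, for every $n\ge 3$, $$K_n=\frac12\sum_{\ell=1}^{n-1}\binom{2n-2}{2\ell-1}K_\ell K_{n-\ell}.$$
   Context: A fully heterochronous ranked tree shape with $n$ leaves is a rooted full binary tree (every node has out-degree $0$ or $2$), without leaf labels, with $n$ leaves, together with a total ordering of all $2n-1$ nodes (leaves included) such that nodes appear in increasing order along every path from the root to a leaf. Two such objects are considered the same if there is an isomorphism of rooted trees preserving the total order. *)

theory Defs
  imports Complex_Main
begin

text \<open>A ranked tree is given by a finite node set V (nodes named by naturals),
  a set E of parent-child edges, and a rank function rk encoding the total
  order on V (u precedes v iff rk u < rk v).\<close>

type_synonym rtree = "nat set \<times> (nat \<times> nat) set \<times> (nat \<Rightarrow> nat)"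

definition children :: "(nat \<times> nat) set \<Rightarrow> nat \<Rightarrow> nat set" where
  "children E v = {c. (v, c) \<in> E}"

definition fhrts :: "nat \<Rightarrow> rtree \<Rightarrow> bool" where
  "fhrts n T = (case T of (V, E, rk) \<Rightarrow>
     finite V \<and> E \<subseteq> V \<times> V \<and>
     (\<exists>\<rho>\<in>V. (\<forall>u. (u, \<rho>) \<notin> E) \<and>
             (\<forall>v\<in>V. v \<noteq> \<rho> \<longrightarrow> (\<exists>!u. (u, v) \<in> E)) \<and>
             (\<forall>v\<in>V. (\<rho>, v) \<in> E\<^sup>*)) \<and>
     (\<forall>v\<in>V. card (children E v) = 0 \<or> card (children E v) = 2) \<and>
     card {v\<in>V. children E v = {}} = n \<and>
     bij_betw rk V {0..<card V} \<and>
     (\<forall>(u, v)\<in>E. rk u < rk v))"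

definition rt_iso :: "rtree \<Rightarrow> rtree \<Rightarrow> bool" where
  "rt_iso S T = (case S of (V1, E1, rk1) \<Rightarrow> case T of (V2, E2, rk2) \<Rightarrow>
     (\<exists>f. bij_betw f V1 V2 \<and>
          (\<forall>u\<in>V1. \<forall>v\<in>V1. ((u, v) \<in> E1 \<longleftrightarrow> (f u, f v) \<in> E2)) \<and>
          (\<forall>u\<in>V1. \<forall>v\<in>V1. (rk1 u < rk1 v \<longleftrightarrow> rk2 (f u) < rk2 (f v)))))"

definition K :: "nat \<Rightarrow> nat" where
  "K n = card ({T. fhrts n T} // {(S, T). fhrts n S \<and> fhrts n T \<and> rt_iso S T})"

end

theory Submission
  imports Defs
begin

definition tr :: "nat set \<Rightarrow> (nat \<times> nat) set \<Rightarrow> nat \<Rightarrow> bool" where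
  "tr V E n = (finite V \<and> E \<subseteq> V \<times> V \<and>
     (\<exists>\<rho>\<in>V. (\<forall>u. (u, \<rho>) \<notin> E) \<and>
             (\<forall>v\<in>V. v \<noteq> \<rho> \<longrightarrow> (\<exists>!u. (u, v) \<in> E)) \<and>
             (\<forall>v\<in>V. (\<rho>, v) \<in> E\<^sup>*)) \<and>
     (\<forall>v\<in>V. card (children E v) = 0 \<or> card (children E v) = 2) \<and>
     card {v\<in>V. children E v = {}} = n \<and>
     (\<forall>(u, v)\<in>E. u < v))"

lemma rtr_le: "(a,b)\<in>E\<^sup>* \<Longrightarrow> \<forall>(u,v)\<in>E. u < (v::nat) \<Longrightarrow> a \<le> b"
  by (induction rule: rtrancl_induct) fastforce+

lemma rtr_in: "(a,b)\<in>E\<^sup>* \<Longrightarrow> a \<in> L \<Longrightarrow> E \<subseteq> L \<times> L \<Longrightarrow> b \<in> L"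
  by (induction rule: rtrancl_induct) auto

lemma tr_rootD:
  assumes "tr V E n"
  shows "Min V \<in> V" "\<forall>u. (u, Min V) \<notin> E" "\<forall>v\<in>V. v \<noteq> Min V \<longrightarrow> (\<exists>!u. (u, v) \<in> E)"
    "\<forall>v\<in>V. (Min V, v) \<in> E\<^sup>*" "finite V" "E \<subseteq> V \<times> V"
    "\<forall>v\<in>V. card (children E v) = 0 \<or> card (children E v) = 2"
    "card {v\<in>V. children E v = {}} = n" "\<forall>(u, v)\<in>E. u < v"
proof -
  from assms obtain \<rho> where r: "\<rho>\<in>V" "\<forall>u. (u, \<rho>) \<notin> E" "\<forall>v\<in>V. v \<noteq> \<rho> \<longrightarrow> (\<exists>!u. (u, v) \<in> E)"
    "\<forall>v\<in>V. (\<rho>, v) \<in> E\<^sup>*" and f: "finite V" and inc: "\<forall>(u, v)\<in>E. u < v"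
    unfolding tr_def by blast
  have "Min V = \<rho>"
    using r(1,4) f inc rtr_le by (intro Min_eqI) auto
  then show "Min V \<in> V" "\<forall>u. (u, Min V) \<notin> E" "\<forall>v\<in>V. v \<noteq> Min V \<longrightarrow> (\<exists>!u. (u, v) \<in> E)"
    "\<forall>v\<in>V. (Min V, v) \<in> E\<^sup>*" using r by auto
  show "finite V" "E \<subseteq> V \<times> V"
    "\<forall>v\<in>V. card (children E v) = 0 \<or> card (children E v) = 2"
    "card {v\<in>V. children E v = {}} = n" "\<forall>(u, v)\<in>E. u < v" using assms unfolding tr_def by blast+
qed

lemma tr_par_unique:
  assumes "tr V E n" "(y,z)\<in>E" "(y',z)\<in>E" shows "y = y'"
proof -
  have "z \<in> V" "z \<noteq> Min V" using tr_rootD[OF assms(1)] assms(2) by auto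
  then show ?thesis using tr_rootD(3)[OF assms(1)] assms(2,3) by blast
qed

lemma tr_nonempty: "tr V E n \<Longrightarrow> V \<noteq> {}"
  using tr_rootD(1) by fastforce

lemma tr_single: "tr {a} E n \<longleftrightarrow> E = {} \<and> n = 1"
proof
  assume T: "tr {a} E n"
  have "E = {}" using tr_rootD(6,9)[OF T] by auto
  moreover have "children {} a = {}" by (simp add: children_def)
  ultimately show "E = {} \<and> n = 1" using tr_rootD(8)[OF T] by (simp add: children_def)
next
  assume "E = {} \<and> n = 1"
  then show "tr {a} E n" by (auto simp: tr_def children_def)
qed

lemma comparable:
  assumes T: "tr V E n" and "(a,v)\<in>E\<^sup>*" "(b,v)\<in>E\<^sup>*"
  shows "(a,b)\<in>E\<^sup>* \<or> (b,a)\<in>E\<^sup>*"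
  using assms(2,3)
proof (induction arbitrary: b rule: rtrancl_induct)
  case base then show ?case by auto
next
  case (step y z)
  from step.prems show ?case
  proof (cases rule: rtranclE)
    case base then show ?thesis using step by auto
  next
    case (step y')
    then have "y' = y" using tr_par_unique[OF T] \<open>(y,z)\<in>E\<close> by blast
    then show ?thesis using step.IH step by auto
  qed
qed

lemma tr_decomp:
  assumes T: "tr L E n" and ne: "L \<noteq> {Min L}"
  shows "\<exists>A B E1 E2 n1 n2. A \<inter> B = {} \<and> L = insert (Min L) (A \<union> B) \<and> Min L \<notin> A \<and> Min L \<notin> B
     \<and> tr A E1 n1 \<and> tr B E2 n2 \<and> n = n1 + n2 \<and> E = E1 \<union> E2 \<union> {(Min L, Min A), (Min L, Min B)}"
proof -
  define r where "r = Min L"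
  note R = tr_rootD[OF T, folded r_def]
  have inc: "\<And>u v. (u,v)\<in>E \<Longrightarrow> u < v" using R(9) by blast
  have EL: "\<And>u v. (u,v)\<in>E \<Longrightarrow> u \<in> L \<and> v \<in> L" using R(6) by blast
  have par: "\<And>y y' z. (y,z)\<in>E \<Longrightarrow> (y',z)\<in>E \<Longrightarrow> y = y'" using tr_par_unique[OF T] by blast
  obtain v where v: "v \<in> L" "v \<noteq> r" using ne R(1) r_def by blast
  then have "(r,v) \<in> E\<^sup>+" using R(4) by (auto simp: rtrancl_eq_or_trancl)
  then obtain w where "(r,w)\<in>E" by (meson tranclD)
  then have "children E r \<noteq> {}" by (auto simp: children_def)
  moreover have "finite (children E r)"
    using R(5) EL by (auto simp: children_def intro: finite_subset[of _ L])
  ultimately have "card (children E r) = 2" using R(7) R(1) by (metis card_0_eq)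
  then obtain c1 c2 where cc: "children E r = {c1,c2}" "c1 \<noteq> c2" by (meson card_2_iff)
  then have e1: "(r,c1)\<in>E" and e2: "(r,c2)\<in>E" by (auto simp: children_def)
  have rc: "r < c1" "r < c2" using inc e1 e2 by auto
  define A where "A = {v. (c1,v)\<in>E\<^sup>*}"
  define B where "B = {v. (c2,v)\<in>E\<^sup>*}"
  define E1 where "E1 = E \<inter> A \<times> A"
  define E2 where "E2 = E \<inter> B \<times> B"
  have AL: "A \<subseteq> L" unfolding A_def using rtr_in[OF _ _ R(6)] EL e1 by blast
  have BL: "B \<subseteq> L" unfolding B_def using rtr_in[OF _ _ R(6)] EL e2 by blast
  have rA: "r \<notin> A" unfolding A_def using rtr_le[OF _ R(9)] rc by fastforce
  have rB: "r \<notin> B" unfolding B_def using rtr_le[OF _ R(9)] rc by fastforce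
  have clA: "\<And>u v. (u,v)\<in>E \<Longrightarrow> u \<in> A \<Longrightarrow> v \<in> A" unfolding A_def by auto
  have clB: "\<And>u v. (u,v)\<in>E \<Longrightarrow> u \<in> B \<Longrightarrow> v \<in> B" unfolding B_def by auto
  have nreach: "(a,b) \<notin> E\<^sup>*" if "(r,a)\<in>E" "(r,b)\<in>E" "a \<noteq> b" for a b
  proof
    assume "(a,b)\<in>E\<^sup>*"
    then have "(a,b)\<in>E\<^sup>+" using that by (simp add: rtrancl_eq_or_trancl)
    then obtain w where "(a,w)\<in>E\<^sup>*" "(w,b)\<in>E" by (meson tranclD2)
    then have "w = r" using par that by blast
    then have "a \<le> r" using rtr_le[OF _ R(9)] \<open>(a,w)\<in>E\<^sup>*\<close> by blast
    then show False using inc that by force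
  qed
  have AB: "A \<inter> B = {}"
  proof (rule ccontr)
    assume "A \<inter> B \<noteq> {}"
    then obtain x where "(c1,x)\<in>E\<^sup>*" "(c2,x)\<in>E\<^sup>*" unfolding A_def B_def by blast
    then have "(c1,c2)\<in>E\<^sup>* \<or> (c2,c1)\<in>E\<^sup>*" using comparable[OF T] by blast
    then show False using nreach e1 e2 cc(2) by metis
  qed
  have LAB: "L = insert r (A \<union> B)"
  proof
    show "insert r (A \<union> B) \<subseteq> L" using AL BL R(1) by auto
    show "L \<subseteq> insert r (A \<union> B)"
    proof
      fix x assume x: "x \<in> L"
      show "x \<in> insert r (A \<union> B)"
      proof (cases "x = r")
        case False
        then have "(r,x) \<in> E\<^sup>+" using R(4) x by (metis rtrancl_eq_or_trancl)
        then obtain w where "(r,w)\<in>E" "(w,x)\<in>E\<^sup>*" by (meson tranclD)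
        moreover have "w \<in> {c1,c2}" using \<open>(r,w)\<in>E\<close> cc(1) by (auto simp: children_def)
        ultimately show ?thesis unfolding A_def B_def by auto
      qed simp
    qed
  qed
  have EE: "E = E1 \<union> E2 \<union> {(r, c1), (r, c2)}"
  proof
    show "E \<subseteq> E1 \<union> E2 \<union> {(r, c1), (r, c2)}"
    proof
      fix e assume "e \<in> E"
      then obtain u v where e: "e = (u,v)" "(u,v)\<in>E" by (cases e) auto
      then have "u \<in> insert r (A \<union> B)" using EL LAB by blast
      moreover have "u = r \<Longrightarrow> v \<in> {c1,c2}" using e cc(1) by (auto simp: children_def)
      ultimately show "e \<in> E1 \<union> E2 \<union> {(r, c1), (r, c2)}"
        using e clA clB unfolding E1_def E2_def by auto
    qed
    show "E1 \<union> E2 \<union> {(r, c1), (r, c2)} \<subseteq> E" using e1 e2 E1_def E2_def by auto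
  qed
  have c1A: "c1 \<in> A" and c2B: "c2 \<in> B" unfolding A_def B_def by auto
  have minA: "Min A = c1"
    using AL R(5) c1A rtr_le[OF _ R(9)] by (intro Min_eqI) (auto intro: finite_subset simp: A_def)
  have minB: "Min B = c2"
    using BL R(5) c2B rtr_le[OF _ R(9)] by (intro Min_eqI) (auto intro: finite_subset simp: B_def)
  have sub: "tr X (E \<inter> X \<times> X) (card {v\<in>X. children (E \<inter> X \<times> X) v = {}})"
    if X: "X = {v. (c,v)\<in>E\<^sup>*}" "(r,c)\<in>E" for X c
  proof -
    have XL: "X \<subseteq> L" unfolding X using rtr_in[OF _ _ R(6)] EL that by blast
    have cX: "c \<in> X" using X by auto
    have rX: "r \<notin> X" unfolding X using rtr_le[OF _ R(9)] inc[OF X(2)] by fastforce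
    have cl: "\<And>u v. (u,v)\<in>E \<Longrightarrow> u \<in> X \<Longrightarrow> v \<in> X" unfolding X by auto
    have ch: "children (E \<inter> X \<times> X) v = children E v" if "v \<in> X" for v
      using cl that by (auto simp: children_def)
    have reach: "(c,v) \<in> (E \<inter> X \<times> X)\<^sup>*" if "(c,v)\<in>E\<^sup>*" for v
      using that
    proof (induction rule: rtrancl_induct)
      case (step y z)
      then have "y \<in> X" "z \<in> X" unfolding X by auto
      then show ?case using step by (meson IntI mem_Sigma_iff rtrancl.simps)
    qed simp
    have "\<exists>\<rho>\<in>X. (\<forall>u. (u, \<rho>) \<notin> E \<inter> X \<times> X) \<and>
             (\<forall>v\<in>X. v \<noteq> \<rho> \<longrightarrow> (\<exists>!u. (u, v) \<in> E \<inter> X \<times> X)) \<and>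
             (\<forall>v\<in>X. (\<rho>, v) \<in> (E \<inter> X \<times> X)\<^sup>*)"
    proof (intro bexI[of _ c] conjI ballI impI)
      show "\<forall>u. (u, c) \<notin> E \<inter> X \<times> X" using par X(2) rX by blast
      show "(c,v) \<in> (E \<inter> X \<times> X)\<^sup>*" if "v \<in> X" for v using reach that X by blast
      show "\<exists>!u. (u, v) \<in> E \<inter> X \<times> X" if "v \<in> X" "v \<noteq> c" for v
      proof -
        have "(c,v)\<in>E\<^sup>+" using that X by (simp add: rtrancl_eq_or_trancl)
        then obtain w where "(c,w)\<in>E\<^sup>*" "(w,v)\<in>E" by (meson tranclD2)
        then have "(w,v) \<in> E \<inter> X \<times> X" using that X by auto
        then show ?thesis using par by blast
      qed
    qed (rule cX)
    moreover have "finite X" using XL R(5) finite_subset by blast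
    moreover have "\<forall>v\<in>X. card (children (E \<inter> X \<times> X) v) = 0 \<or> card (children (E \<inter> X \<times> X) v) = 2"
      using ch R(7) XL by auto
    ultimately show ?thesis unfolding tr_def using R(9) by blast
  qed
  define n1 where "n1 = card {v\<in>A. children E1 v = {}}"
  define n2 where "n2 = card {v\<in>B. children E2 v = {}}"
  have T1: "tr A E1 n1" using sub[OF A_def e1] unfolding E1_def n1_def by blast
  have T2: "tr B E2 n2" using sub[OF B_def e2] unfolding E2_def n2_def by blast
  have ch1: "children E1 v = children E v" if "v \<in> A" for v
    using clA that by (auto simp: children_def E1_def)
  have ch2: "children E2 v = children E v" if "v \<in> B" for v
    using clB that by (auto simp: children_def E2_def)
  have "{v\<in>L. children E v = {}} = {v\<in>A. children E1 v = {}} \<union> {v\<in>B. children E2 v = {}}"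
    using LAB ch1 ch2 cc(1) by auto
  moreover have "finite A" "finite B" using AL BL R(5) finite_subset by blast+
  ultimately have "n = n1 + n2" unfolding n1_def n2_def using R(8) AB
    by (simp add: card_Un_disjoint disjoint_iff)
  show ?thesis
    using AB LAB rA rB T1 T2 \<open>n = n1 + n2\<close> EE minA minB unfolding r_def by blast
qed

lemma tr_comp:
  assumes T1: "tr A E1 n1" and T2: "tr B E2 n2" and AB: "A \<inter> B = {}" and rA: "r \<notin> A" and rB: "r \<notin> B"
    and lt: "\<forall>a\<in>A \<union> B. r < a"
  shows "tr (insert r (A \<union> B)) (E1 \<union> E2 \<union> {(r, Min A), (r, Min B)}) (n1 + n2)"
proof -
  define L where "L = insert r (A \<union> B)"
  define E where "E = E1 \<union> E2 \<union> {(r, Min A), (r, Min B)}"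
  note R1 = tr_rootD[OF T1] and R2 = tr_rootD[OF T2]
  have E1s: "\<And>u v. (u,v)\<in>E1 \<Longrightarrow> u \<in> A \<and> v \<in> A" using R1(6) by blast
  have E2s: "\<And>u v. (u,v)\<in>E2 \<Longrightarrow> u \<in> B \<and> v \<in> B" using R2(6) by blast
  have p1: "\<And>y y' z. (y,z)\<in>E1 \<Longrightarrow> (y',z)\<in>E1 \<Longrightarrow> y = y'" using tr_par_unique[OF T1] by blast
  have p2: "\<And>y y' z. (y,z)\<in>E2 \<Longrightarrow> (y',z)\<in>E2 \<Longrightarrow> y = y'" using tr_par_unique[OF T2] by blast
  have mAB: "Min A \<noteq> Min B" using R1(1) R2(1) AB by auto
  have fin: "finite L" using R1(5) R2(5) L_def by auto
  have sub: "E \<subseteq> L \<times> L" using R1(1,6) R2(1,6) unfolding E_def L_def by auto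
  have noparr: "\<forall>u. (u, r) \<notin> E" using E1s E2s rA rB R1(1) R2(1) unfolding E_def by auto
  have ex: "\<exists>u. (u,v)\<in>E" if "v \<in> L" "v \<noteq> r" for v
  proof -
    have "v \<in> A \<or> v \<in> B" using that L_def by auto
    then show ?thesis
    proof
      assume "v \<in> A" then show ?thesis
        using R1(3) unfolding E_def by (cases "v = Min A") auto
    next
      assume "v \<in> B" then show ?thesis
        using R2(3) unfolding E_def by (cases "v = Min B") auto
    qed
  qed
  have pA: "(u,z)\<in>E \<longleftrightarrow> (u,z)\<in>E1 \<or> (u = r \<and> z = Min A)" if "z \<in> A" for u z
    using that E2s AB R2(1) unfolding E_def by blast
  have pB: "(u,z)\<in>E \<longleftrightarrow> (u,z)\<in>E2 \<or> (u = r \<and> z = Min B)" if "z \<in> B" for u z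
    using that E1s AB R1(1) unfolding E_def by blast
  have pO: "(u,z)\<notin>E" if "z \<notin> A" "z \<notin> B" for u z
    using that E1s E2s R1(1) R2(1) unfolding E_def by blast
  have uq: "y = y'" if "(y,z)\<in>E" "(y',z)\<in>E" for y y' z
  proof -
    consider "z \<in> A" | "z \<in> B" | "z \<notin> A" "z \<notin> B" by blast
    then show ?thesis
    proof cases
      case 1 then show ?thesis using pA[OF 1] that p1 R1(2) by metis
    next
      case 2 then show ?thesis using pB[OF 2] that p2 R2(2) by metis
    next
      case 3 then show ?thesis using pO that by blast
    qed
  qed
  have reach: "(r,v)\<in>E\<^sup>*" if "v \<in> L" for v
  proof -
    have "E1\<^sup>* \<subseteq> E\<^sup>*" unfolding E_def by (intro rtrancl_mono) auto
    moreover have "E2\<^sup>* \<subseteq> E\<^sup>*" unfolding E_def by (intro rtrancl_mono) auto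
    moreover have "(r, Min A) \<in> E" "(r, Min B) \<in> E" unfolding E_def by auto
    ultimately show ?thesis using that R1(4) R2(4) unfolding L_def
      by (auto intro: converse_rtrancl_into_rtrancl)
  qed
  have chA: "children E v = children E1 v" if "v \<in> A" for v
    using that E2s AB rA unfolding E_def children_def by auto
  have chB: "children E v = children E2 v" if "v \<in> B" for v
    using that E1s AB rB unfolding E_def children_def by auto
  have chr: "children E r = {Min A, Min B}"
    using E1s E2s rA rB unfolding E_def children_def by auto
  have cards: "\<forall>v\<in>L. card (children E v) = 0 \<or> card (children E v) = 2"
    using chA chB chr R1(7) R2(7) mAB unfolding L_def by auto
  have "{v\<in>L. children E v = {}} = {v\<in>A. children E1 v = {}} \<union> {v\<in>B. children E2 v = {}}"
    using chA chB chr unfolding L_def by auto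
  then have leaves: "card {v\<in>L. children E v = {}} = n1 + n2"
    using R1(5,8) R2(5,8) AB by (simp add: card_Un_disjoint disjoint_iff)
  have inc: "\<forall>(u, v)\<in>E. u < v" using R1(9) R2(9) lt R1(1) R2(1) unfolding E_def by auto
  have "\<exists>\<rho>\<in>L. (\<forall>u. (u, \<rho>) \<notin> E) \<and> (\<forall>v\<in>L. v \<noteq> \<rho> \<longrightarrow> (\<exists>!u. (u, v) \<in> E)) \<and> (\<forall>v\<in>L. (\<rho>, v) \<in> E\<^sup>*)"
    using noparr ex uq reach unfolding L_def by blast
  then show ?thesis using fin sub cards leaves inc unfolding tr_def L_def E_def by blast
qed

lemma comp_desc:
  assumes T1: "tr A E1 n1" and T2: "tr B E2 n2" and AB: "A \<inter> B = {}" and rA: "r \<notin> A"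
  shows "{v. (Min A, v) \<in> (E1 \<union> E2 \<union> {(r, Min A), (r, Min B)})\<^sup>*} = A"
proof -
  define E where "E = E1 \<union> E2 \<union> {(r, Min A), (r, Min B)}"
  note R1 = tr_rootD[OF T1] and R2 = tr_rootD[OF T2]
  have "(Min A, v) \<in> E\<^sup>* \<Longrightarrow> v \<in> A" for v
  proof (induction rule: rtrancl_induct)
    case base then show ?case using R1(1) .
  next
    case (step y z)
    then show ?case using R1(6) R2(6) AB rA unfolding E_def by auto
  qed
  moreover have "E1\<^sup>* \<subseteq> E\<^sup>*" unfolding E_def by (intro rtrancl_mono) auto
  ultimately show ?thesis using R1(4) unfolding E_def[symmetric] by blast
qed

lemma comp_restrict:
  assumes T1: "tr A E1 n1" and T2: "tr B E2 n2" and AB: "A \<inter> B = {}" and rA: "r \<notin> A" and rB: "r \<notin> B"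
  shows "(E1 \<union> E2 \<union> {(r, Min A), (r, Min B)}) \<inter> A \<times> A = E1"
    "(E1 \<union> E2 \<union> {(r, Min A), (r, Min B)}) \<inter> B \<times> B = E2"
  using tr_rootD(6)[OF T1] tr_rootD(6)[OF T2] AB rA rB by auto

lemma tr_size: "tr L E n \<Longrightarrow> card L + 1 = 2 * n"
proof (induction "card L" arbitrary: L E n rule: less_induct)
  case less
  show ?case
  proof (cases "L = {Min L}")
    case True
    have "tr {Min L} E n" using less.prems True by simp
    then have "n = 1" using tr_single by blast
    then show ?thesis by (subst True) simp
  next
    case False
    from tr_decomp[OF less.prems False] obtain A B E1 E2 n1 n2 where
      d: "A \<inter> B = {}" "L = insert (Min L) (A \<union> B)" "Min L \<notin> A" "Min L \<notin> B"
      "tr A E1 n1" "tr B E2 n2" "n = n1 + n2" by blast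
    have fA: "finite A" "finite B" using tr_rootD(5) d(5,6) by blast+
    have cU: "card (A \<union> B) = card A + card B" using fA d(1) by (simp add: card_Un_disjoint)
    have "card L = Suc (card (A \<union> B))" using d(3,4) fA by (subst d(2)) simp
    then have cL: "card L = Suc (card A + card B)" using cU by simp
    have "card A < card L" "card B < card L" using cL by auto
    then have "card A + 1 = 2 * n1" "card B + 1 = 2 * n2"
      using less.hyps[OF _ d(5)] less.hyps[OF _ d(6)] by blast+
    then show ?thesis using cL d(7) by simp
  qed
qed

definition TS :: "nat set \<Rightarrow> (nat \<times> nat) set set" where "TS L = {E. \<exists>n. tr L E n}"
definition cnt :: "nat set \<Rightarrow> nat" where "cnt L = card (TS L)"

lemma TS_finite: "finite L \<Longrightarrow> finite (TS L)"
proof -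
  assume "finite L"
  moreover have "TS L \<subseteq> Pow (L \<times> L)" unfolding TS_def using tr_rootD(6) by blast
  ultimately show ?thesis by (meson finite_Pow_iff finite_SigmaI finite_subset)
qed

lemma cnt_rec1:
  assumes fin: "finite L" and ne: "L \<noteq> {}" "L \<noteq> {Min L}"
  shows "cnt L = (\<Sum>A\<in>{A. A \<subseteq> L - {Min L} \<and> Min (L - {Min L}) \<in> A}. cnt A * cnt (L - {Min L} - A))"
proof -
  define r where "r = Min L"
  define L' where "L' = L - {r}"
  define s where "s = Min L'"
  define P1 where "P1 = {A. A \<subseteq> L' \<and> s \<in> A}"
  define \<psi> :: "nat set \<times> (nat \<times> nat) set \<times> (nat \<times> nat) set \<Rightarrow> (nat \<times> nat) set" where
    "\<psi> = (\<lambda>(A,(E1,E2)). E1 \<union> E2 \<union> {(r, Min A), (r, Min (L' - A))})"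
  define SG where "SG = Sigma P1 (\<lambda>A. TS A \<times> TS (L' - A))"
  have rL: "r \<in> L" using fin ne r_def by simp
  have L'ne: "L' \<noteq> {}" using ne rL unfolding L'_def r_def by blast
  have finL': "finite L'" using fin L'_def by simp
  have sL': "s \<in> L'" using L'ne finL' s_def by simp
  have rlt: "\<forall>a\<in>L'. r < a" using fin unfolding L'_def r_def
    by (metis DiffE Min_le le_neq_implies_less singletonI)
  have sle: "\<forall>a\<in>L'. s \<le> a" using finL' s_def by simp
  have LL': "L = insert r L'" using rL L'_def by blast
  have rL': "r \<notin> L'" using L'_def by simp
  have img: "TS L = \<psi> ` SG"
  proof
    show "\<psi> ` SG \<subseteq> TS L"
    proof
      fix E assume "E \<in> \<psi> ` SG"
      then obtain A E1 E2 where x: "A \<in> P1" "E1 \<in> TS A" "E2 \<in> TS (L' - A)" "E = \<psi> (A,(E1,E2))"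
        unfolding SG_def by auto
      obtain n1 n2 where "tr A E1 n1" "tr (L' - A) E2 n2" using x(2,3) unfolding TS_def by blast
      from tr_comp[OF this, of r] have "tr (insert r (A \<union> (L' - A))) E (n1 + n2)"
        using x(1,4) rL' rlt unfolding P1_def \<psi>_def by auto
      moreover have "insert r (A \<union> (L' - A)) = L" using x(1) LL' unfolding P1_def by auto
      ultimately show "E \<in> TS L" unfolding TS_def by auto
    qed
    show "TS L \<subseteq> \<psi> ` SG"
    proof
      fix E assume "E \<in> TS L"
      then obtain n where T: "tr L E n" unfolding TS_def by blast
      from tr_decomp[OF T ne(2), folded r_def] obtain A B E1 E2 n1 n2 where
        d: "A \<inter> B = {}" "L = insert r (A \<union> B)" "r \<notin> A" "r \<notin> B"
        "tr A E1 n1" "tr B E2 n2" "E = E1 \<union> E2 \<union> {(r, Min A), (r, Min B)}" by blast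
      have L'AB: "L' = A \<union> B" using d(2-4) L'_def by auto
      have AsL: "A \<subseteq> L'" "B \<subseteq> L'" using L'AB by auto
      have BA1: "B = L' - A" using L'AB d(1) by auto
      have BA2: "A = L' - B" using L'AB d(1) by auto
      show "E \<in> \<psi> ` SG"
      proof (cases "s \<in> A")
        case True
        then have "(A, (E1, E2)) \<in> SG" unfolding SG_def P1_def TS_def using d(5,6) AsL BA1 by auto
        moreover have "E = \<psi> (A, (E1, E2))" unfolding \<psi>_def using d(7) BA1 by simp
        ultimately show ?thesis by blast
      next
        case False
        then have "s \<in> B" using sL' L'AB by auto
        then have "(B, (E2, E1)) \<in> SG" unfolding SG_def P1_def TS_def using d(5,6) AsL BA2 by auto
        moreover have "E = \<psi> (B, (E2, E1))" unfolding \<psi>_def using d(7) BA2 by auto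
        ultimately show ?thesis by blast
      qed
    qed
  qed
  have inj: "inj_on \<psi> SG"
  proof
    fix x y assume x: "x \<in> SG" and y: "y \<in> SG" and eq: "\<psi> x = \<psi> y"
    obtain A E1 E2 where xx: "x = (A,(E1,E2))" by (cases x) auto
    obtain A' E1' E2' where yy: "y = (A',(E1',E2'))" by (cases y) auto
    have key: "{v. (s, v) \<in> (\<psi> (X,(F1,F2)))\<^sup>*} = X \<and> \<psi> (X,(F1,F2)) \<inter> X \<times> X = F1
          \<and> \<psi> (X,(F1,F2)) \<inter> (L' - X) \<times> (L' - X) = F2"
      if "(X,(F1,F2)) \<in> SG" for X F1 F2
    proof -
      from that have X: "X \<subseteq> L'" "s \<in> X" and "F1 \<in> TS X" "F2 \<in> TS (L' - X)"
        unfolding SG_def P1_def by auto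
      then obtain n1 n2 where T1: "tr X F1 n1" and T2: "tr (L' - X) F2 n2" unfolding TS_def by blast
      have "Min X = s" using X sle finL' by (intro Min_eqI) (auto intro: finite_subset)
      then show ?thesis
        using comp_desc[OF T1 T2 _, of r] comp_restrict[OF T1 T2 _, of r] X rL'
        unfolding \<psi>_def by auto
    qed
    from key[of A E1 E2] key[of A' E1' E2'] x y eq show "x = y" unfolding xx yy by metis
  qed
  have finP1: "finite P1" unfolding P1_def
    by (rule rev_finite_subset[of "Pow L'"]) (use finL' in auto)
  have "cnt L = card (\<psi> ` SG)" unfolding cnt_def img ..
  also have "\<dots> = card SG" by (rule card_image[OF inj])
  also have "\<dots> = (\<Sum>A\<in>P1. card (TS A \<times> TS (L' - A)))"
  proof -
    have "\<forall>a\<in>P1. finite (TS a \<times> TS (L' - a))"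
    proof
      fix a assume "a \<in> P1"
      then have "a \<subseteq> L'" unfolding P1_def by blast
      then have "finite a" using finL' by (rule rev_finite_subset[rotated])
      moreover have "finite (L' - a)" using finL' by simp
      ultimately show "finite (TS a \<times> TS (L' - a))" by (intro finite_cartesian_product TS_finite)
    qed
    then show ?thesis unfolding SG_def by (rule card_SigmaI[OF finP1])
  qed
  also have "\<dots> = (\<Sum>A\<in>P1. cnt A * cnt (L' - A))" by (simp add: card_cartesian_product cnt_def)
  finally show ?thesis unfolding P1_def s_def L'_def r_def .
qed

lemma cnt_rec:
  assumes fin: "finite L" and ne: "L \<noteq> {}" "L \<noteq> {Min L}"
  shows "2 * cnt L = (\<Sum>A\<in>Pow (L - {Min L}). cnt A * cnt (L - {Min L} - A))"
proof -
  define L' where "L' = L - {Min L}"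
  define s where "s = Min L'"
  define P1 where "P1 = {A. A \<subseteq> L' \<and> s \<in> A}"
  define P2 where "P2 = {A. A \<subseteq> L' \<and> s \<notin> A}"
  define F where "F = (\<lambda>A. cnt A * cnt (L' - A))"
  have finL': "finite L'" using fin L'_def by simp
  have finP1: "finite P1" unfolding P1_def
    by (rule rev_finite_subset[of "Pow L'"]) (use finL' in auto)
  have finP2: "finite P2" unfolding P2_def
    by (rule rev_finite_subset[of "Pow L'"]) (use finL' in auto)
  note finP = finP1 finP2
  have PU: "Pow L' = P1 \<union> P2" "P1 \<inter> P2 = {}" unfolding P1_def P2_def by auto
  have P2img: "P2 = (\<lambda>A. L' - A) ` P1"
  proof -
    have "L' \<noteq> {}" using ne fin unfolding L'_def by (metis Min_in insert_Diff)
    then have "s \<in> L'" using finL' s_def by simp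
    show ?thesis
    proof
      show "(\<lambda>A. L' - A) ` P1 \<subseteq> P2" unfolding P1_def P2_def by auto
      show "P2 \<subseteq> (\<lambda>A. L' - A) ` P1"
      proof
        fix A assume A: "A \<in> P2"
        then have "L' - A \<in> P1" using \<open>s \<in> L'\<close> unfolding P1_def P2_def by auto
        moreover have "A = L' - (L' - A)" using A unfolding P2_def by auto
        ultimately show "A \<in> (\<lambda>A. L' - A) ` P1" by blast
      qed
    qed
  qed
  have injc: "inj_on (\<lambda>A. L' - A) P1" unfolding P1_def by (rule inj_onI) auto
  have "sum F P2 = sum (F \<circ> (\<lambda>A. L' - A)) P1" unfolding P2img by (rule sum.reindex[OF injc])
  also have "\<dots> = sum F P1" unfolding F_def P1_def
    by (rule sum.cong) (auto simp: Diff_Diff_Int Int_absorb1 mult.commute)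
  finally have "sum F (Pow L') = 2 * sum F P1" using PU finP by (simp add: sum.union_disjoint)
  moreover have "cnt L = sum F P1" using cnt_rec1[OF assms] unfolding F_def P1_def s_def L'_def .
  ultimately show ?thesis unfolding F_def L'_def by simp
qed

lemma sum_pow_card:
  fixes g :: "nat \<Rightarrow> nat"
  assumes fin: "finite S"
  shows "(\<Sum>A\<in>Pow S. g (card A)) = (\<Sum>j\<le>card S. (card S choose j) * g j)"
proof -
  have "(\<Sum>A\<in>Pow S. g (card A)) = (\<Sum>j\<le>card S. \<Sum>A\<in>{A. A \<in> Pow S \<and> card A = j}. g (card A))"
    by (rule sum.group[symmetric]) (use fin in \<open>auto simp: card_mono\<close>)
  also have "\<dots> = (\<Sum>j\<le>card S. (card S choose j) * g j)"
  proof (rule sum.cong[OF refl])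
    fix j
    have "(\<Sum>A\<in>{A. A \<in> Pow S \<and> card A = j}. g (card A)) = (\<Sum>A\<in>{A. A \<in> Pow S \<and> card A = j}. g j)"
      by (rule sum.cong) auto
    also have "\<dots> = card {A. A \<in> Pow S \<and> card A = j} * g j" by simp
    also have "{A. A \<in> Pow S \<and> card A = j} = {B. B \<subseteq> S \<and> card B = j}" by auto
    finally show "(\<Sum>A\<in>{A. A \<in> Pow S \<and> card A = j}. g (card A)) = (card S choose j) * g j"
      using n_subsets[OF fin] by simp
  qed
  finally show ?thesis .
qed

lemma cnt_single: "cnt {a} = 1"
proof -
  have "TS {a} = {{}}" unfolding TS_def using tr_single by auto
  then show ?thesis unfolding cnt_def by simp
qed

lemma cnt_empty: "cnt {} = 0"
proof -
  have "TS {} = {}" unfolding TS_def using tr_nonempty by auto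
  then show ?thesis unfolding cnt_def by simp
qed

lemma rec_general:
  assumes fin: "finite M" and k: "card M = k" "2 \<le> k"
    and IH: "\<And>A. finite A \<Longrightarrow> card A < k \<Longrightarrow> cnt A = cnt {0..<card A}"
  shows "2 * cnt M = (\<Sum>j\<le>k-1. ((k-1) choose j) * (cnt {0..<j} * cnt {0..<k-1-j}))"
proof -
  define M' where "M' = M - {Min M}"
  have ne1: "M \<noteq> {}" using k by auto
  have ne2: "M \<noteq> {Min M}"
  proof
    assume h: "M = {Min M}"
    have "card M = 1" by (subst h) simp
    with k show False by simp
  qed
  note ne = ne1 ne2
  have mM: "Min M \<in> M" using fin ne by simp
  have cM': "card M' = k - 1" using mM fin k unfolding M'_def by simp
  have fM': "finite M'" using fin M'_def by simp
  have "2 * cnt M = (\<Sum>A\<in>Pow M'. cnt A * cnt (M' - A))" using cnt_rec[OF fin ne] unfolding M'_def .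
  also have "\<dots> = (\<Sum>A\<in>Pow M'. cnt {0..<card A} * cnt {0..<k-1-card A})"
  proof (rule sum.cong[OF refl])
    fix A assume "A \<in> Pow M'"
    then have A: "A \<subseteq> M'" by simp
    then have fA: "finite A" "finite (M' - A)" using fM' by (auto intro: rev_finite_subset)
    have cA: "card A \<le> k - 1" using card_mono[OF fM' A] cM' by simp
    have cD: "card (M' - A) = k - 1 - card A" using card_Diff_subset[OF fA(1) A] cM' by simp
    have "cnt A = cnt {0..<card A}" using IH[OF fA(1)] cA k by simp
    moreover have "cnt (M' - A) = cnt {0..<k-1-card A}" using IH[OF fA(2)] cD k by simp
    ultimately show "cnt A * cnt (M' - A) = cnt {0..<card A} * cnt {0..<k-1-card A}" by simp
  qed
  also have "\<dots> = (\<Sum>j\<le>k-1. ((k-1) choose j) * (cnt {0..<j} * cnt {0..<k-1-j}))"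
    using sum_pow_card[OF fM', of "\<lambda>j. cnt {0..<j} * cnt {0..<k-1-j}"] cM' by simp
  finally show ?thesis .
qed

lemma cnt_inv: "finite L \<Longrightarrow> cnt L = cnt {0..<card L}"
proof (induction "card L" arbitrary: L rule: less_induct)
  case less
  consider "card L = 0" | "card L = 1" | "2 \<le> card L" by linarith
  then show ?case
  proof cases
    case 1 then show ?thesis using less.prems by simp
  next
    case 2
    then obtain a where "L = {a}" by (auto simp: card_1_singleton_iff)
    then show ?thesis by (simp add: cnt_single)
  next
    case 3
    have IH: "\<And>A. finite A \<Longrightarrow> card A < card L \<Longrightarrow> cnt A = cnt {0..<card A}" using less.hyps by blast
    have "2 * cnt L = 2 * cnt {0..<card L}"
      using rec_general[OF less.prems refl 3 IH] rec_general[of "{0..<card L}" "card L", OF _ _ 3 IH]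
      by simp
    then show ?thesis by simp
  qed
qed

lemma c_rec: "2 \<le> k \<Longrightarrow> 2 * cnt {0..<k} = (\<Sum>j\<le>k-1. ((k-1) choose j) * (cnt {0..<j} * cnt {0..<k-1-j}))"
  by (rule rec_general) (auto intro: cnt_inv)

lemma c_even: "even k \<Longrightarrow> cnt {0..<k} = 0"
proof -
  assume "even k"
  have "TS {0..<k} = {}"
  proof (rule ccontr)
    assume "TS {0..<k} \<noteq> {}"
    then obtain E n where "tr {0..<k} E n" unfolding TS_def by blast
    from tr_size[OF this] have "k + 1 = 2 * n" by simp
    then show False using \<open>even k\<close> by presburger
  qed
  then show ?thesis unfolding cnt_def by simp
qed

definition canon :: "rtree \<Rightarrow> rtree" where
  "canon T = (case T of (V, E, rk) \<Rightarrow> ({0..<card V}, map_prod rk rk ` E, id))"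

lemma rtr_image: "(a,b)\<in>E\<^sup>* \<Longrightarrow> (h a, h b) \<in> (map_prod h h ` E)\<^sup>*"
proof (induction rule: rtrancl_induct)
  case (step y z)
  have "(h y, h z) \<in> map_prod h h ` E" using step(2) by force
  then show ?case using step(3) by (meson rtrancl_into_rtrancl)
qed simp

lemma image_pair_iff:
  assumes "inj_on h V" "E \<subseteq> V \<times> V" "a \<in> V" "b \<in> V"
  shows "(h a, h b) \<in> map_prod h h ` E \<longleftrightarrow> (a,b) \<in> E"
proof
  assume "(h a, h b) \<in> map_prod h h ` E"
  then obtain a' b' where "(a',b') \<in> E" "h a' = h a" "h b' = h b" by auto
  moreover have "a' \<in> V" "b' \<in> V" using assms(2) calculation(1) by auto
  ultimately show "(a,b)\<in>E" using assms(1,3,4) by (metis inj_on_eq_iff)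
next
  assume "(a,b)\<in>E"
  then show "(h a, h b) \<in> map_prod h h ` E" by (rule rev_image_eqI) simp
qed

lemma tr_image:
  assumes inj: "inj_on h V" and f: "finite V" and sub: "E \<subseteq> V \<times> V" and r: "\<rho> \<in> V"
    and np: "\<forall>u. (u, \<rho>) \<notin> E" and up: "\<forall>v\<in>V. v \<noteq> \<rho> \<longrightarrow> (\<exists>!u. (u, v) \<in> E)"
    and re: "\<forall>v\<in>V. (\<rho>, v) \<in> E\<^sup>*"
    and ch: "\<forall>v\<in>V. card (children E v) = 0 \<or> card (children E v) = 2"
    and lv: "card {v\<in>V. children E v = {}} = n" and inc: "\<forall>(u, v)\<in>E. h u < h v"
  shows "tr (h ` V) (map_prod h h ` E) n"
proof -
  define E' where "E' = map_prod h h ` E"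
  have E'D: "\<exists>a b. (a,b)\<in>E \<and> x = h a \<and> y = h b \<and> a \<in> V \<and> b \<in> V" if "(x,y)\<in>E'" for x y
    using that sub unfolding E'_def by auto
  have chi: "children E' (h v) = h ` children E v" if v: "v \<in> V" for v
  proof
    show "children E' (h v) \<subseteq> h ` children E v"
    proof
      fix x assume "x \<in> children E' (h v)"
      then have "(h v, x) \<in> E'" by (simp add: children_def)
      then obtain a b where "(a,b)\<in>E" "h v = h a" "x = h b" "a \<in> V" by (metis E'D)
      then have "a = v" using inj v by (metis inj_on_eq_iff)
      then show "x \<in> h ` children E v" using \<open>(a,b)\<in>E\<close> \<open>x = h b\<close> by (auto simp: children_def)
    qed
    show "h ` children E v \<subseteq> children E' (h v)" unfolding E'_def children_def by force
  qed
  have chsub: "children E v \<subseteq> V" for v using sub by (auto simp: children_def)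
  have chc: "card (children E' (h v)) = card (children E v)" if "v \<in> V" for v
    using chi[OF that] card_image[OF inj_on_subset[OF inj chsub]] by simp
  have lvs: "{w\<in>h ` V. children E' w = {}} = h ` {v\<in>V. children E v = {}}"
    using chi by auto
  have lvc: "card {w\<in>h ` V. children E' w = {}} = n"
  proof -
    have "{v\<in>V. children E v = {}} \<subseteq> V" by blast
    then show ?thesis unfolding lvs using card_image[OF inj_on_subset[OF inj]] lv by simp
  qed
  have np': "\<forall>u. (u, h \<rho>) \<notin> E'"
  proof (intro allI notI)
    fix u assume "(u, h \<rho>) \<in> E'"
    then obtain a b where "(a,b)\<in>E" "h \<rho> = h b" "b \<in> V" using E'D by blast
    then have "b = \<rho>" using inj_onD[OF inj _ r] by metis
    then show False using np \<open>(a,b)\<in>E\<close> by blast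
  qed
  have up': "\<exists>!u. (u, w) \<in> E'" if w: "w \<in> h ` V" "w \<noteq> h \<rho>" for w
  proof -
    obtain v where v: "v \<in> V" "w = h v" using w(1) by blast
    then have "v \<noteq> \<rho>" using w by auto
    then have "\<exists>!u. (u,v)\<in>E" using up v by blast
    then obtain u where u: "(u,v)\<in>E" "\<And>u'. (u',v)\<in>E \<Longrightarrow> u' = u" by blast
    show ?thesis
    proof (rule ex1I[of _ "h u"])
      show "(h u, w) \<in> E'" unfolding E'_def v(2) by (rule rev_image_eqI[OF u(1)]) simp
      fix x assume "(x, w) \<in> E'"
      then obtain a b where "(a,b)\<in>E" "x = h a" "w = h b" "b \<in> V" using E'D by blast
      then have "b = v" using inj_onD[OF inj _ _ v(1)] v(2) by metis
      then show "x = h u" using u \<open>(a,b)\<in>E\<close> \<open>x = h a\<close> by blast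
    qed
  qed
  have re': "\<forall>w\<in>h ` V. (h \<rho>, w) \<in> E'\<^sup>*"
  proof
    fix w assume "w \<in> h ` V"
    then obtain v where "v \<in> V" "w = h v" by blast
    then show "(h \<rho>, w) \<in> E'\<^sup>*" unfolding E'_def using rtr_image[of \<rho> v E h] re by blast
  qed
  have inc': "\<forall>(x, y)\<in>E'. x < y" using inc unfolding E'_def by auto
  have sub': "E' \<subseteq> h ` V \<times> h ` V" using sub unfolding E'_def by auto
  have ch': "\<forall>w\<in>h ` V. card (children E' w) = 0 \<or> card (children E' w) = 2" using chc ch by auto
  have "\<exists>\<rho>'\<in>h ` V. (\<forall>u. (u, \<rho>') \<notin> E') \<and> (\<forall>w\<in>h ` V. w \<noteq> \<rho>' \<longrightarrow> (\<exists>!u. (u, w) \<in> E'))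
      \<and> (\<forall>w\<in>h ` V. (\<rho>', w) \<in> E'\<^sup>*)"
    by (rule bexI[of _ "h \<rho>"]) (use r np' up' re' in auto)
  moreover have "finite (h ` V)" using f by simp
  ultimately show ?thesis unfolding tr_def E'_def[symmetric]
    using sub' ch' lvc inc' by blast
qed

lemma fhrts_canon:
  assumes "fhrts n (V, E, rk)" shows "tr {0..<card V} (map_prod rk rk ` E) n"
proof -
  from assms have b: "bij_betw rk V {0..<card V}" and inc: "\<forall>(u, v)\<in>E. rk u < rk v"
    and f: "finite V" and sub: "E \<subseteq> V \<times> V"
    and rt: "\<exists>\<rho>\<in>V. (\<forall>u. (u, \<rho>) \<notin> E) \<and> (\<forall>v\<in>V. v \<noteq> \<rho> \<longrightarrow> (\<exists>!u. (u, v) \<in> E)) \<and> (\<forall>v\<in>V. (\<rho>, v) \<in> E\<^sup>*)"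
    and ch: "\<forall>v\<in>V. card (children E v) = 0 \<or> card (children E v) = 2"
    and lv: "card {v\<in>V. children E v = {}} = n"
    unfolding fhrts_def by auto
  from rt obtain \<rho> where r: "\<rho>\<in>V" "\<forall>u. (u, \<rho>) \<notin> E" "\<forall>v\<in>V. v \<noteq> \<rho> \<longrightarrow> (\<exists>!u. (u, v) \<in> E)" "\<forall>v\<in>V. (\<rho>, v) \<in> E\<^sup>*"
    by blast
  have "tr (rk ` V) (map_prod rk rk ` E) n"
    using tr_image[OF bij_betw_imp_inj_on[OF b] f sub r ch lv inc] .
  then show ?thesis using bij_betw_imp_surj_on[OF b] by simp
qed

lemma fhrts_id: "fhrts n ({0..<m}, E, id) \<longleftrightarrow> tr {0..<m} E n"
  unfolding fhrts_def tr_def by (simp add: bij_betw_id)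

lemma rank_count:
  assumes b: "bij_betw rk V {0..<card V}" and u: "u \<in> V"
  shows "card {w\<in>V. rk w < rk u} = rk u"
proof -
  have inj: "inj_on rk {w\<in>V. rk w < rk u}" using bij_betw_imp_inj_on[OF b] by (rule inj_on_subset) auto
  have "rk u < card V" using b u by (auto simp: bij_betw_def)
  then have "rk ` {w\<in>V. rk w < rk u} = {0..<rk u}" using bij_betw_imp_surj_on[OF b] by force
  then show ?thesis using card_image[OF inj] by simp
qed

lemma iso_canon:
  assumes x: "fhrts n x" and y: "fhrts n y"
  shows "rt_iso x y \<longleftrightarrow> canon x = canon y"
proof -
  obtain V1 E1 rk1 where xx: "x = (V1, E1, rk1)" by (cases x) auto
  obtain V2 E2 rk2 where yy: "y = (V2, E2, rk2)" by (cases y) auto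
  have b1: "bij_betw rk1 V1 {0..<card V1}" and s1: "E1 \<subseteq> V1 \<times> V1"
    using x unfolding xx fhrts_def by auto
  have b2: "bij_betw rk2 V2 {0..<card V2}" and s2: "E2 \<subseteq> V2 \<times> V2"
    using y unfolding yy fhrts_def by auto
  have i1: "inj_on rk1 V1" and i2: "inj_on rk2 V2" using b1 b2 bij_betw_imp_inj_on by auto
  show ?thesis
  proof
    assume "rt_iso x y"
    then obtain f where f: "bij_betw f V1 V2" and fe: "\<forall>u\<in>V1. \<forall>v\<in>V1. ((u, v) \<in> E1 \<longleftrightarrow> (f u, f v) \<in> E2)"
      and fo: "\<forall>u\<in>V1. \<forall>v\<in>V1. (rk1 u < rk1 v \<longleftrightarrow> rk2 (f u) < rk2 (f v))"
      unfolding xx yy rt_iso_def by auto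
    have cV: "card V1 = card V2" using f by (rule bij_betw_same_card)
    have fi: "inj_on f V1" and fs: "f ` V1 = V2" using f by (auto simp: bij_betw_def)
    have rr: "rk2 (f u) = rk1 u" if u: "u \<in> V1" for u
    proof -
      have "f ` {w\<in>V1. rk1 w < rk1 u} = {w\<in>V2. rk2 w < rk2 (f u)}"
      proof
        show "f ` {w\<in>V1. rk1 w < rk1 u} \<subseteq> {w\<in>V2. rk2 w < rk2 (f u)}" using fo u fs by auto
        show "{w\<in>V2. rk2 w < rk2 (f u)} \<subseteq> f ` {w\<in>V1. rk1 w < rk1 u}"
        proof
          fix w assume "w \<in> {w\<in>V2. rk2 w < rk2 (f u)}"
          then obtain w' where "w' \<in> V1" "w = f w'" "rk2 (f w') < rk2 (f u)" using fs by auto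
          then show "w \<in> f ` {w\<in>V1. rk1 w < rk1 u}" using fo u by auto
        qed
      qed
      moreover have "card (f ` {w\<in>V1. rk1 w < rk1 u}) = card {w\<in>V1. rk1 w < rk1 u}"
        by (rule card_image) (rule inj_on_subset[OF fi], auto)
      ultimately have "card {w\<in>V2. rk2 w < rk2 (f u)} = card {w\<in>V1. rk1 w < rk1 u}" by simp
      then show ?thesis using rank_count[OF b1 u] rank_count[OF b2] u fs by auto
    qed
    have "map_prod rk2 rk2 ` E2 = map_prod rk1 rk1 ` E1"
    proof
      show "map_prod rk1 rk1 ` E1 \<subseteq> map_prod rk2 rk2 ` E2"
      proof
        fix e assume "e \<in> map_prod rk1 rk1 ` E1"
        then obtain u v where "(u,v)\<in>E1" "e = (rk1 u, rk1 v)" by auto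
        moreover then have "u \<in> V1" "v \<in> V1" using s1 by auto
        ultimately have "(f u, f v) \<in> E2" "e = (rk2 (f u), rk2 (f v))" using fe rr by auto
        then show "e \<in> map_prod rk2 rk2 ` E2" by force
      qed
      show "map_prod rk2 rk2 ` E2 \<subseteq> map_prod rk1 rk1 ` E1"
      proof
        fix e assume "e \<in> map_prod rk2 rk2 ` E2"
        then obtain a b where ab: "(a,b)\<in>E2" "e = (rk2 a, rk2 b)" by auto
        then have "a \<in> V2" "b \<in> V2" using s2 by auto
        then obtain u v where "u \<in> V1" "v \<in> V1" "a = f u" "b = f v" using fs by auto
        then have "(u,v) \<in> E1" "e = (rk1 u, rk1 v)" using fe rr ab by auto
        then show "e \<in> map_prod rk1 rk1 ` E1" by force
      qed
    qed
    then show "canon x = canon y" unfolding xx yy canon_def using cV by simp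
  next
    assume "canon x = canon y"
    then have cV0: "{0..<card V1} = {0..<card V2}" and M: "map_prod rk1 rk1 ` E1 = map_prod rk2 rk2 ` E2"
      unfolding xx yy canon_def by auto
    have cV: "card V1 = card V2" using cV0 by (metis card_atLeastLessThan diff_zero)
    define f where "f = inv_into V2 rk2 \<circ> rk1"
    have bi: "bij_betw (inv_into V2 rk2) {0..<card V1} V2" using bij_betw_inv_into[OF b2] cV by simp
    have f: "bij_betw f V1 V2" unfolding f_def using bij_betw_trans[OF b1 bi] .
    have rr: "rk2 (f u) = rk1 u" if "u \<in> V1" for u
    proof -
      have "rk1 u \<in> rk2 ` V2" using that b1 b2 cV by (auto simp: bij_betw_def)
      then show ?thesis unfolding f_def by (simp add: f_inv_into_f)
    qed
    have fV: "f u \<in> V2" if "u \<in> V1" for u using f that by (auto simp: bij_betw_def)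
    have "\<forall>u\<in>V1. \<forall>v\<in>V1. ((u, v) \<in> E1 \<longleftrightarrow> (f u, f v) \<in> E2)"
    proof (intro ballI)
      fix u v assume uv: "u \<in> V1" "v \<in> V1"
      have "(u, v) \<in> E1 \<longleftrightarrow> (rk1 u, rk1 v) \<in> map_prod rk1 rk1 ` E1" using image_pair_iff[OF i1 s1 uv] by simp
      also have "\<dots> \<longleftrightarrow> (rk2 (f u), rk2 (f v)) \<in> map_prod rk2 rk2 ` E2" using M rr uv by simp
      also have "\<dots> \<longleftrightarrow> (f u, f v) \<in> E2" using image_pair_iff[OF i2 s2 fV fV] uv by simp
      finally show "(u, v) \<in> E1 \<longleftrightarrow> (f u, f v) \<in> E2" .
    qed
    moreover have "\<forall>u\<in>V1. \<forall>v\<in>V1. (rk1 u < rk1 v \<longleftrightarrow> rk2 (f u) < rk2 (f v))" using rr by simp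
    ultimately show "rt_iso x y" unfolding xx yy rt_iso_def using f by auto
  qed
qed

lemma canon_fhrts: "fhrts n x \<Longrightarrow> fhrts n (canon x)"
proof -
  assume x: "fhrts n x"
  obtain V E rk where xx: "x = (V, E, rk)" by (cases x) auto
  show ?thesis using fhrts_canon[OF x[unfolded xx]] fhrts_id unfolding xx canon_def by simp
qed

lemma canon_idem: "canon (canon x) = canon x"
  by (cases x) (simp add: canon_def map_prod.id)

lemma K_eq: assumes n: "1 \<le> n" shows "K n = cnt {0..<2*n-1}"
proof -
  define Fh where "Fh = {T. fhrts n T}"
  define R where "R = {(S, T). fhrts n S \<and> fhrts n T \<and> rt_iso S T}"
  define G where "G = (\<lambda>c. {y. fhrts n y \<and> canon y = c})"
  have cls: "R `` {x} = G (canon x)" if "x \<in> Fh" for x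
  proof -
    have x: "fhrts n x" using that unfolding Fh_def by simp
    show ?thesis unfolding R_def G_def using iso_canon[OF x] x by auto
  qed
  have "Fh // R = (\<lambda>x. R `` {x}) ` Fh" unfolding quotient_def by auto
  also have "\<dots> = (\<lambda>x. G (canon x)) ` Fh" using cls by (rule image_cong[OF refl])
  also have "\<dots> = G ` (canon ` Fh)" by (simp add: image_image)
  finally have Q: "Fh // R = G ` (canon ` Fh)" .
  have inj: "inj_on G (canon ` Fh)"
  proof (rule inj_onI)
    fix c1 c2 assume c1: "c1 \<in> canon ` Fh" and c2: "c2 \<in> canon ` Fh" and eq: "G c1 = G c2"
    obtain x1 where x1: "x1 \<in> Fh" "c1 = canon x1" using c1 by blast
    have "canon x1 \<in> G c1" using canon_fhrts x1 canon_idem unfolding G_def Fh_def by auto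
    then have "canon x1 \<in> G c2" using eq by simp
    then show "c1 = c2" using x1 canon_idem unfolding G_def by auto
  qed
  have K1: "K n = card (canon ` Fh)"
    unfolding K_def Fh_def[symmetric] R_def[symmetric] Q using card_image[OF inj] .
  define m where "m = 2*n-1"
  have cF: "canon ` Fh = (\<lambda>E. ({0..<m}, E, (id::nat\<Rightarrow>nat))) ` {E. tr {0..<m} E n}"
  proof
    show "canon ` Fh \<subseteq> (\<lambda>E. ({0..<m}, E, (id::nat\<Rightarrow>nat))) ` {E. tr {0..<m} E n}"
    proof
      fix c assume "c \<in> canon ` Fh"
      then obtain V E rk where x: "fhrts n (V, E, rk)" "c = canon (V, E, rk)" unfolding Fh_def by auto
      have T: "tr {0..<card V} (map_prod rk rk ` E) n" by (rule fhrts_canon[OF x(1)])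
      have "card V = m" using tr_size[OF T] n unfolding m_def by simp
      then show "c \<in> (\<lambda>E. ({0..<m}, E, (id::nat\<Rightarrow>nat))) ` {E. tr {0..<m} E n}"
        using T x(2) unfolding canon_def by auto
    qed
    show "(\<lambda>E. ({0..<m}, E, (id::nat\<Rightarrow>nat))) ` {E. tr {0..<m} E n} \<subseteq> canon ` Fh"
    proof
      fix c assume "c \<in> (\<lambda>E. ({0..<m}, E, (id::nat\<Rightarrow>nat))) ` {E. tr {0..<m} E n}"
      then obtain E where E: "tr {0..<m} E n" "c = ({0..<m}, E, (id::nat\<Rightarrow>nat))" by blast
      have "c \<in> Fh" using E fhrts_id unfolding Fh_def by simp
      moreover have "canon c = c" using E(2) unfolding canon_def by (simp add: map_prod.id)
      ultimately show "c \<in> canon ` Fh" by force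
    qed
  qed
  have "card (canon ` Fh) = card {E. tr {0..<m} E n}"
    unfolding cF by (rule card_image) (auto intro: inj_onI)
  also have "{E. tr {0..<m} E n} = TS {0..<m}"
  proof
    show "{E. tr {0..<m} E n} \<subseteq> TS {0..<m}" unfolding TS_def by blast
    show "TS {0..<m} \<subseteq> {E. tr {0..<m} E n}"
    proof
      fix E assume "E \<in> TS {0..<m}"
      then obtain n' where T: "tr {0..<m} E n'" unfolding TS_def by blast
      have "m + 1 = 2 * n'" using tr_size[OF T] by simp
      then have "n' = n" using n unfolding m_def by simp
      then show "E \<in> {E. tr {0..<m} E n}" using T by simp
    qed
  qed
  finally show ?thesis using K1 unfolding cnt_def m_def by simp
qed

theorem proposition2:
  shows "K 1 = 1 \<and> K 2 = 1 \<and>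
    (\<forall>n\<ge>3. real (K n) =
       1/2 * (\<Sum>l=1..n-1. real ((2*n-2) choose (2*l-1)) * real (K l) * real (K (n-l))))"
proof -
  define c where "c j = cnt {0..<j}" for j
  have c0: "c 0 = 0" unfolding c_def using cnt_empty by simp
  have c1: "c 1 = 1" unfolding c_def using cnt_single[of 0] by simp
  have cev: "c j = 0" if "even j" for j unfolding c_def using c_even that by blast
  have Kc: "K l = c (2*l-1)" if "1 \<le> l" for l unfolding c_def using K_eq that by blast
  have crec: "2 * c k = (\<Sum>j\<le>k-1. ((k-1) choose j) * (c j * c (k-1-j)))" if "2 \<le> k" for k
    unfolding c_def using c_rec that by blast
  have K1: "K 1 = 1" using Kc[of 1] c1 by simp
  have "2 * c 3 = (\<Sum>j\<le>2. (2 choose j) * (c j * c (2-j)))" using crec[of 3] by simp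
  also have "\<dots> = 2" using c0 c1 cev[of 2] by (simp add: numeral_2_eq_2)
  finally have K2: "K 2 = 1" using Kc[of 2] by simp
  have main: "2 * K n = (\<Sum>l=1..n-1. ((2*n-2) choose (2*l-1)) * K l * K (n-l))" if n: "3 \<le> n" for n
  proof -
    define h where "h j = ((2*n-2) choose j) * (c j * c (2*n-2-j))" for j
    have "2 * K n = 2 * c (2*n-1)" using Kc n by simp
    also have "\<dots> = (\<Sum>j\<le>2*n-2. h j)" using crec[of "2*n-1"] n unfolding h_def
      by (simp add: numeral_2_eq_2)
    also have "\<dots> = (\<Sum>j\<in>(\<lambda>l. 2*l-1) ` {1..n-1}. h j)"
    proof (rule sum.mono_neutral_right)
      show "finite {..2*n-2}" by simp
      show "(\<lambda>l. 2*l-1) ` {1..n-1} \<subseteq> {..2*n-2}" by auto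
      show "\<forall>j\<in>{..2*n-2} - (\<lambda>l. 2*l-1) ` {1..n-1}. h j = 0"
      proof
        fix j assume j: "j \<in> {..2*n-2} - (\<lambda>l. 2*l-1) ` {1..n-1}"
        have "even j"
        proof (rule ccontr)
          assume "odd j"
          then obtain l where l: "j = 2*l+1" by (meson oddE)
          then have "Suc l \<in> {1..n-1}" using j by auto
          moreover have "j = 2 * Suc l - 1" using l by simp
          ultimately show False using j by blast
        qed
        then show "h j = 0" unfolding h_def using cev by simp
      qed
    qed
    also have "\<dots> = (\<Sum>l=1..n-1. h (2*l-1))"
      by (rule sum.reindex_cong[of "\<lambda>l. 2*l-1"]) (auto intro: inj_onI)
    also have "\<dots> = (\<Sum>l=1..n-1. ((2*n-2) choose (2*l-1)) * K l * K (n-l))"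
    proof (rule sum.cong[OF refl])
      fix l assume l: "l \<in> {1..n-1}"
      have "K l = c (2*l-1)" using Kc l by simp
      moreover have "K (n-l) = c (2*n-2-(2*l-1))"
      proof -
        have "2*(n-l)-1 = 2*n-2-(2*l-1)" using l by auto
        then show ?thesis using Kc[of "n-l"] l by auto
      qed
      ultimately show "h (2*l-1) = ((2*n-2) choose (2*l-1)) * K l * K (n-l)"
        unfolding h_def by simp
    qed
    finally show ?thesis .
  qed
  have "\<forall>n\<ge>3. real (K n) =
       1/2 * (\<Sum>l=1..n-1. real ((2*n-2) choose (2*l-1)) * real (K l) * real (K (n-l)))"
  proof (intro allI impI)
    fix n :: nat assume "3 \<le> n"
    then have "real (2 * K n) = real (\<Sum>l=1..n-1. ((2*n-2) choose (2*l-1)) * K l * K (n-l))"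
      using main by presburger
    then show "real (K n) =
       1/2 * (\<Sum>l=1..n-1. real ((2*n-2) choose (2*l-1)) * real (K l) * real (K (n-l)))"
      by (simp add: of_nat_sum)
  qed
  then show ?thesis using K1 K2 by blast
qed


end
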